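(* Let $d\ge1$ and let $D$ be a Newton diagram in $2$ variables whose support is exactly $\{(a,b)\in\mathbb N_0^2: a+b<d\}$. Then there exists a Newton diagram $\tilde D$ with the same support such that $\tilde D(a,b)=D(a,b)$ for all $(a,b)$ with $a+b=d-1$, and $SC(\tilde D)=\frac{d+1}{2}$.
   Context: For $m\in\mathbb Z^n$ write $|m|=m_1+\dots+m_n$; $e_1,\dots,e_n$ is the standard basis. A Newton diagram in $n$ variables is a function $D\colon\mathbb Z^n\to\{0,P,N\}$ ($P,N$ formal symbols) whose support $K=D^{-1}(\{P,N\})$ is a finite nonempty subset of $\mathbb N_0^n$. For $a\in\mathbb Z^n$ let $E(a)=\{a,a-e_1,\dots,a-e_n\}$; $E(a)$ is a node of $D$ if the image $D(E(a))$ equals $\{P\}$, $\{N\}$, $\{0,P\}$ or $\{0,N\}$. For $n=2$: a node $E(a)$ is an interior node if no point of $E(a)$ has $D$-value $0$, an edge node if exactly one does, a vertex node if exactly two do; a vertex node is a bottom node if its two $0$-points are $a-e_1$ and $a-e_2$. The weighted surface count is $SC(D)=(\#\text{interior nodes})+\tfrac12\big((\#\text{edge nodes})+(\#\text{vertex nodes})-(\#\text{bottom nodes})\big)$. *)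

theory Defs
  imports Complex_Main
begin

datatype sgn = Zero | P | N

type_synonym pt = "int \<times> int"

definition support :: "(pt \<Rightarrow> sgn) \<Rightarrow> pt set" where
  "support D = {x. D x \<noteq> Zero}"

definition newton_diagram :: "(pt \<Rightarrow> sgn) \<Rightarrow> bool" where
  "newton_diagram D \<longleftrightarrow> finite (support D) \<and> support D \<noteq> {}
     \<and> (\<forall>(a,b)\<in>support D. a \<ge> 0 \<and> b \<ge> 0)"

definition E :: "pt \<Rightarrow> pt set" where
  "E p = {p, (fst p - 1, snd p), (fst p, snd p - 1)}"

definition is_node :: "(pt \<Rightarrow> sgn) \<Rightarrow> pt \<Rightarrow> bool" where
  "is_node D p \<longleftrightarrow> D ` E p \<in> {{P}, {N}, {Zero, P}, {Zero, N}}"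

definition zero_pts :: "(pt \<Rightarrow> sgn) \<Rightarrow> pt \<Rightarrow> pt set" where
  "zero_pts D p = {x \<in> E p. D x = Zero}"

definition interior_nodes :: "(pt \<Rightarrow> sgn) \<Rightarrow> pt set" where
  "interior_nodes D = {p. is_node D p \<and> card (zero_pts D p) = 0}"

definition edge_nodes :: "(pt \<Rightarrow> sgn) \<Rightarrow> pt set" where
  "edge_nodes D = {p. is_node D p \<and> card (zero_pts D p) = 1}"

definition vertex_nodes :: "(pt \<Rightarrow> sgn) \<Rightarrow> pt set" where
  "vertex_nodes D = {p. is_node D p \<and> card (zero_pts D p) = 2}"

definition bottom_nodes :: "(pt \<Rightarrow> sgn) \<Rightarrow> pt set" where
  "bottom_nodes D = {p \<in> vertex_nodes D.
      zero_pts D p = {(fst p - 1, snd p), (fst p, snd p - 1)}}"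

definition SC :: "(pt \<Rightarrow> sgn) \<Rightarrow> real" where
  "SC D = real (card (interior_nodes D))
     + (real (card (edge_nodes D)) + real (card (vertex_nodes D))
        - real (card (bottom_nodes D))) / 2"

end

theory Submission imports Defs begin

lemma card3: "x\<noteq>y \<Longrightarrow> x\<noteq>z \<Longrightarrow> y\<noteq>z \<Longrightarrow>
  card {w. (w=x \<or> w=y \<or> w=z) \<and> Q w} = of_bool (Q x) + of_bool (Q y) + of_bool (Q z)"
proof -
  assume h: "x\<noteq>y" "x\<noteq>z" "y\<noteq>z"
  have eq: "{w. (w=x \<or> w=y \<or> w=z) \<and> Q w} = (if Q x then {x} else {}) \<union> ((if Q y then {y} else {}) \<union> (if Q z then {z} else {}))"
    by auto
  show ?thesis unfolding eq using h
    by (subst card_Un_disjoint; auto; subst card_Un_disjoint; auto)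
qed

lemma card_zero: "card (zero_pts F (a,b)) = of_bool (F(a,b)=Zero) + of_bool (F(a-1,b)=Zero) + of_bool(F(a,b-1)=Zero)"
  unfolding zero_pts_def E_def by (simp add: card3)

lemma node3: "is_node F (a,b) \<longleftrightarrow> (let u = F(a,b); v = F(a-1,b); w = F(a,b-1) in
   (u\<noteq>Zero \<or> v\<noteq>Zero \<or> w\<noteq>Zero) \<and> (u\<noteq>Zero \<and> v\<noteq>Zero \<longrightarrow> u=v)
   \<and> (u\<noteq>Zero \<and> w\<noteq>Zero \<longrightarrow> u=w) \<and> (v\<noteq>Zero \<and> w\<noteq>Zero \<longrightarrow> v=w))"
  unfolding is_node_def E_def
  by (cases "F(a,b)"; cases "F(a-1,b)"; cases "F(a,b-1)") (auto simp: insert_commute doubleton_eq_iff)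

fun flip :: "sgn \<Rightarrow> sgn" where "flip Zero = Zero" | "flip P = N" | "flip N = P"

lemma flip_facts: "s \<noteq> Zero \<Longrightarrow> flip s \<noteq> Zero" "s \<noteq> Zero \<Longrightarrow> flip s \<noteq> s"
  "s \<noteq> Zero \<Longrightarrow> t \<noteq> Zero \<Longrightarrow> (s = flip t) \<longleftrightarrow> s \<noteq> t"
  "s \<noteq> Zero \<Longrightarrow> t \<noteq> Zero \<Longrightarrow> (flip s = t) \<longleftrightarrow> s \<noteq> t"
  by (cases s; cases t; simp)+

definition T :: "nat \<Rightarrow> pt set" where "T d = {(a,b). a\<ge>0 \<and> b\<ge>0 \<and> a+b < int d}"

definition Dp :: "nat \<Rightarrow> (pt \<Rightarrow> sgn) \<Rightarrow> pt \<Rightarrow> sgn" where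
 "Dp d D p = (if p \<in> T d then (if even (int d - 1 - fst p - snd p) then D (int d - 1 - snd p, snd p)
     else flip (D (int d - 1 - snd p, snd p))) else Zero)"

context fixes d :: nat and D :: "pt \<Rightarrow> sgn" assumes d1: "d\<ge>1" and supp: "support D = T d"
begin

lemma Dnz: "p \<in> T d \<Longrightarrow> D p \<noteq> Zero" using supp by (auto simp: support_def)

definition S :: "int \<Rightarrow> sgn" where "S b = D (int d - 1 - b, b)"

lemma S_nz: "0 \<le> b \<Longrightarrow> b < int d \<Longrightarrow> S b \<noteq> Zero"
  unfolding S_def by (rule Dnz) (auto simp: T_def)

lemma D'_out: "(a,b) \<notin> T d \<Longrightarrow> Dp d D (a,b) = Zero" by (simp add: Dp_def)

lemma D'_in: "(a,b) \<in> T d \<Longrightarrow> Dp d D (a,b) = (if even (int d - 1 - a - b) then S b else flip (S b))"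
  by (simp add: Dp_def S_def)

lemma D'_nz: "(a,b) \<in> T d \<Longrightarrow> Dp d D (a,b) \<noteq> Zero"
  using S_nz[of b] by (auto simp: D'_in T_def flip_facts)

lemma D'_zero_iff: "Dp d D (a,b) = Zero \<longleftrightarrow> (a,b) \<notin> T d"
  using D'_nz D'_out by blast

lemma F2: "(a,b) \<in> T d \<Longrightarrow> a \<ge> 1 \<Longrightarrow> Dp d D (a,b) \<noteq> Dp d D (a-1,b)"
proof -
  assume h: "(a,b) \<in> T d" "a \<ge> 1"
  hence h2: "(a-1,b) \<in> T d" by (auto simp: T_def)
  have e: "int d - 1 - (a-1) - b = (int d - 1 - a - b) + 1" by simp
  have "S b \<noteq> Zero" using h S_nz[of b] by (auto simp: T_def)
  thus ?thesis unfolding D'_in[OF h(1)] D'_in[OF h2] e by (auto simp: flip_facts)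
qed

lemma F3: "1 \<le> b \<Longrightarrow> b < int d \<Longrightarrow> Dp d D (0,b) = Dp d D (0,b-1) \<longleftrightarrow> S b \<noteq> S (b-1)"
proof -
  assume h: "1 \<le> b" "b < int d"
  have i1: "(0,b) \<in> T d" and i2: "(0,b-1) \<in> T d" using h by (auto simp: T_def)
  have e: "int d - 1 - 0 - (b-1) = (int d - 1 - 0 - b) + 1" by simp
  have "S b \<noteq> Zero" "S (b-1) \<noteq> Zero" using h S_nz[of b] S_nz[of "b-1"] by auto
  thus ?thesis unfolding D'_in[OF i1] D'_in[OF i2] e by (auto simp: flip_facts)
qed

lemma F4: "0 \<le> a \<Longrightarrow> 0 \<le> b \<Longrightarrow> a + b = int d - 1 \<Longrightarrow> Dp d D (a,b) = S b"
proof -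
  assume h: "0 \<le> a" "0 \<le> b" "a + b = int d - 1"
  hence i: "(a,b) \<in> T d" by (auto simp: T_def)
  have "int d - 1 - a - b = 0" using h by simp
  thus ?thesis unfolding D'_in[OF i] by simp
qed

lemma agree: "0 \<le> a \<Longrightarrow> 0 \<le> b \<Longrightarrow> a + b = int d - 1 \<Longrightarrow> Dp d D (a,b) = D (a,b)"
  using F4 unfolding S_def by (smt (verit))

lemma supp': "support (Dp d D) = T d"
  unfolding support_def using D'_zero_iff by auto

lemma interior: "interior_nodes (Dp d D) = {}"
proof -
  { fix a b assume n: "is_node (Dp d D) (a,b)" and c: "card (zero_pts (Dp d D) (a,b)) = 0"
    from c have i: "(a,b) \<in> T d" "(a-1,b) \<in> T d" by (auto simp: card_zero D'_zero_iff)
    hence "a \<ge> 1" by (auto simp: T_def)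
    hence "Dp d D (a,b) \<noteq> Dp d D (a-1,b)" using F2 i by blast
    with D'_nz[OF i(1)] D'_nz[OF i(2)] n have False by (auto simp: node3 Let_def) }
  thus ?thesis unfolding interior_nodes_def by auto
qed

lemma vertex: "vertex_nodes (Dp d D) = {(0,0),(int d,0),(0,int d)}"
proof -
  have "is_node (Dp d D) p \<and> card (zero_pts (Dp d D) p) = 2 \<longleftrightarrow> p \<in> {(0,0),(int d,0),(0,int d)}" for p
  proof (cases p)
    case (Pair a b)
    show ?thesis unfolding Pair node3 Let_def card_zero D'_zero_iff
      using d1 D'_nz[of a b] D'_nz[of "a-1" b] D'_nz[of a "b-1"]
      by (auto simp: T_def)
  qed
  thus ?thesis unfolding vertex_nodes_def by auto
qed

lemma bottom: "bottom_nodes (Dp d D) = {(0,0)}"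
proof -
  have z: "zero_pts (Dp d D) p = {x \<in> E p. x \<notin> T d}" for p
    unfolding zero_pts_def using D'_zero_iff by (metis prod.collapse)
  have 1: "(0,0) \<in> bottom_nodes (Dp d D)"
    unfolding bottom_nodes_def vertex z using d1 by (auto simp: E_def T_def)
  have 2: "(int d, 0) \<notin> bottom_nodes (Dp d D)"
  proof
    assume "(int d, 0) \<in> bottom_nodes (Dp d D)"
    hence "(int d - 1, 0) \<in> zero_pts (Dp d D) (int d, 0)" unfolding bottom_nodes_def by auto
    thus False unfolding z using d1 by (auto simp: T_def)
  qed
  have 3: "(0, int d) \<notin> bottom_nodes (Dp d D)"
  proof
    assume "(0, int d) \<in> bottom_nodes (Dp d D)"
    hence "(0, int d - 1) \<in> zero_pts (Dp d D) (0, int d)" unfolding bottom_nodes_def by auto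
    thus False unfolding z using d1 by (auto simp: T_def)
  qed
  have "bottom_nodes (Dp d D) \<subseteq> {(0,0),(int d,0),(0,int d)}"
    unfolding bottom_nodes_def vertex by auto
  with 1 2 3 show ?thesis by auto
qed

definition g :: "int \<Rightarrow> pt" where "g b = (if S b \<noteq> S (b-1) then (0,b) else (int d - b, b))"

lemma edge: "edge_nodes (Dp d D) = g ` {1..<int d}"
proof -
  have "is_node (Dp d D) p \<and> card (zero_pts (Dp d D) p) = 1 \<longleftrightarrow> p \<in> g ` {1..<int d}" for p
  proof (cases p)
    case (Pair a b)
    show ?thesis
    proof
      assume "is_node (Dp d D) p \<and> card (zero_pts (Dp d D) p) = 1"
      hence n: "is_node (Dp d D) (a,b)" and c: "card (zero_pts (Dp d D) (a,b)) = 1" using Pair by auto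
      have "(a,b) \<notin> T d \<and> (a-1,b) \<in> T d \<and> (a,b-1) \<in> T d \<or>
            (a,b) \<in> T d \<and> (a-1,b) \<notin> T d \<and> (a,b-1) \<in> T d \<or>
            (a,b) \<in> T d \<and> (a-1,b) \<in> T d \<and> (a,b-1) \<notin> T d"
        using c unfolding card_zero D'_zero_iff by (auto split: if_splits)
      thus "p \<in> g ` {1..<int d}"
      proof (elim disjE conjE)
        assume h: "(a,b) \<notin> T d" "(a-1,b) \<in> T d" "(a,b-1) \<in> T d"
        hence ab: "a \<ge> 1" "b \<ge> 1" "a + b = int d" by (auto simp: T_def)
        have "Dp d D (a-1,b) = Dp d D (a,b-1)"
          using n h D'_nz[of "a-1" b] D'_nz[of a "b-1"] D'_out[of a b] by (auto simp: node3 Let_def)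
        moreover have "Dp d D (a-1,b) = S b" "Dp d D (a,b-1) = S (b-1)" using ab by (auto intro!: F4)
        ultimately have "g b = (a,b)" unfolding g_def using ab by auto
        thus ?thesis using Pair ab by force
      next
        assume h: "(a,b) \<in> T d" "(a-1,b) \<notin> T d" "(a,b-1) \<in> T d"
        hence ab: "a = 0" "b \<ge> 1" "b < int d" by (auto simp: T_def)
        have "Dp d D (0,b) = Dp d D (0,b-1)"
          using n h D'_nz[of a b] D'_nz[of a "b-1"] D'_out[of "a-1" b] ab by (auto simp: node3 Let_def)
        hence "g b = (a,b)" unfolding g_def using ab F3 by auto
        thus ?thesis using Pair ab by force
      next
        assume h: "(a,b) \<in> T d" "(a-1,b) \<in> T d" "(a,b-1) \<notin> T d"
        hence "a \<ge> 1" by (auto simp: T_def)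
        with F2 h n D'_nz have False by (auto simp: node3 Let_def)
        thus ?thesis ..
      qed
    next
      assume "p \<in> g ` {1..<int d}"
      then obtain b where b: "b \<in> {1..<int d}" "p = g b" by auto
      show "is_node (Dp d D) p \<and> card (zero_pts (Dp d D) p) = 1"
      proof (cases "S b \<noteq> S (b-1)")
        case True
        hence p: "p = (0,b)" using b unfolding g_def by auto
        have i: "(0,b) \<in> T d" "(0,b-1) \<in> T d" "(0-1,b) \<notin> T d" using b by (auto simp: T_def)
        have "Dp d D (0,b) = Dp d D (0,b-1)" using F3 True b by auto
        thus ?thesis unfolding p node3 Let_def card_zero D'_zero_iff using i D'_nz[of 0 b]
          by auto
      next
        case False
        hence p: "p = (int d - b, b)" using b unfolding g_def by auto
        have i: "(int d - b,b) \<notin> T d" "(int d - b,b-1) \<in> T d" "(int d - b-1,b) \<in> T d" using b by (auto simp: T_def)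
        have "Dp d D (int d - b - 1,b) = S b" "Dp d D (int d - b, b - 1) = S (b-1)"
          using b by (auto intro!: F4)
        hence "Dp d D (int d - b - 1,b) = Dp d D (int d - b, b - 1)" using False by simp
        thus ?thesis unfolding p node3 Let_def card_zero D'_zero_iff using i D'_nz[of "int d - b" "b-1"]
          by auto
      qed
    qed
  qed
  thus ?thesis unfolding edge_nodes_def by auto
qed

lemma card_edge: "card (edge_nodes (Dp d D)) = d - 1"
proof -
  have "inj_on g {1..<int d}" unfolding inj_on_def g_def by auto
  hence "card (edge_nodes (Dp d D)) = card {1..<int d}" unfolding edge by (rule card_image)
  also have "\<dots> = d - 1" by simp
  finally show ?thesis .
qed

lemma SC_val: "SC (Dp d D) = (real d + 1) / 2"
proof -
  have cv: "card (vertex_nodes (Dp d D)) = 3" unfolding vertex using d1 by auto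
  have cb: "card (bottom_nodes (Dp d D)) = 1" unfolding bottom by simp
  show ?thesis unfolding SC_def interior card_edge cv cb using d1 by (simp add: of_nat_diff)
qed

end

theorem mainTheorem9:
  fixes d :: nat and D :: "pt \<Rightarrow> sgn"
  assumes "d \<ge> 1"
    and "newton_diagram D"
    and "support D = {(a, b). a \<ge> 0 \<and> b \<ge> 0 \<and> a + b < int d}"
  shows "\<exists>D'. newton_diagram D' \<and> support D' = support D
           \<and> (\<forall>a b. a \<ge> 0 \<and> b \<ge> 0 \<and> a + b = int d - 1 \<longrightarrow> D' (a, b) = D (a, b))
           \<and> SC D' = (real d + 1) / 2"
proof -
  have s: "support D = T d" using assms(3) by (simp add: T_def)
  have "support (Dp d D) = support D" using supp'[OF assms(1) s] s by simp
  moreover hence "newton_diagram (Dp d D)" using assms(2) unfolding newton_diagram_def by simp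
  ultimately show ?thesis using agree[OF assms(1) s] SC_val[OF assms(1) s] by blast
qed

end
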